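(* Let $X$ be a set, let $R_1,R_2$ be binary relations on $X$, and let $x\in X$. Assume that (1) $R_2$ is well-founded, and (2) there exist a set $B_1\subseteq X$, a well-founded relation $R_1'$ on $X$ and a transitive relation $E_1$ on $X$ such that: (2.i) $x\in B_1$, and for all $a,b\in X$, if $a\in B_1$ and $a \xrightarrow{R_1\cup R_2} b$ then $b\in B_1$; (2.ii) for all $a,b$, if $a\in B_1$ and $a\xrightarrow{R_1} b$ then $a\xrightarrow{R_1'} b$; (2.iii) for all $a,b,c$, if $a\xrightarrow{R_1'} b$ and $b\xrightarrow{E_1} c$ then $a\xrightarrow{R_1'} c$; (2.iv) for all $a,b$, if $a\xrightarrow{R_2} b$ then $a\xrightarrow{E_1} b$. Then $\mathsf{Acc}(R_1\cup R_2, x)$ holds.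
   Context: For a relation $R$ on $X$ write $a\xrightarrow{R} b$ for $(a,b)\in R$. $R$ is called well-founded if every element is accessible, i.e. there is no infinite sequence $x_0,x_1,x_2,\dots$ with $x_i\xrightarrow{R}x_{i+1}$ for all $i$. $\mathsf{Acc}(R,x)$ ("$x$ is accessible for $R$") means that every sequence $x=x_0\xrightarrow{R}x_1\xrightarrow{R}\cdots$ starting from $x$ is finite (constructively: the inductive predicate stating that all $R$-successors of $x$ are accessible). *)

theory Defs
  imports Main
begin

text \<open>Paper convention: a pair (a,b) in R means a steps to b (b is an R-successor of a).
  R is well-founded iff there is no infinite forward chain; in Isabelle's convention
  (wf r: no infinite chain with (x_(i+1), x_i) in r) this is wf of the converse.\<close>

definition wf_succ :: "('a \<times> 'a) set \<Rightarrow> bool" where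
  "wf_succ R \<longleftrightarrow> wf (R\<inverse>)"

definition Acc :: "('a \<times> 'a) set \<Rightarrow> 'a \<Rightarrow> bool" where
  "Acc R x \<longleftrightarrow> x \<in> Wellfounded.acc (R\<inverse>)"

end

theory Submission
  imports Defs
begin

theorem proposition1:
  fixes R1 R2 :: "('a \<times> 'a) set" and x :: 'a
  assumes "wf_succ R2"
    and "\<exists>B1 R1' E1.
           wf_succ R1' \<and> trans E1 \<and>
           x \<in> B1 \<and> (\<forall>a b. a \<in> B1 \<and> (a, b) \<in> R1 \<union> R2 \<longrightarrow> b \<in> B1) \<and>
           (\<forall>a b. a \<in> B1 \<and> (a, b) \<in> R1 \<longrightarrow> (a, b) \<in> R1') \<and>
           (\<forall>a b c. (a, b) \<in> R1' \<and> (b, c) \<in> E1 \<longrightarrow> (a, c) \<in> R1') \<and>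
           (\<forall>a b. (a, b) \<in> R2 \<longrightarrow> (a, b) \<in> E1)"
  shows "Acc (R1 \<union> R2) x"
proof -
  obtain B1 R1' E1 where w1: "wf (R1'\<inverse>)" and xB: "x \<in> B1"
    and cl: "\<And>a b. a \<in> B1 \<Longrightarrow> (a, b) \<in> R1 \<union> R2 \<Longrightarrow> b \<in> B1"
    and r1: "\<And>a b. a \<in> B1 \<Longrightarrow> (a, b) \<in> R1 \<Longrightarrow> (a, b) \<in> R1'"
    and comp: "\<And>a b c. (a, b) \<in> R1' \<Longrightarrow> (b, c) \<in> E1 \<Longrightarrow> (a, c) \<in> R1'"
    and r2: "\<And>a b. (a, b) \<in> R2 \<Longrightarrow> (a, b) \<in> E1"
  proof -
    from assms(2) obtain B1 R1' E1 where h: "wf_succ R1' \<and> trans E1 \<and>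
           x \<in> B1 \<and> (\<forall>a b. a \<in> B1 \<and> (a, b) \<in> R1 \<union> R2 \<longrightarrow> b \<in> B1) \<and>
           (\<forall>a b. a \<in> B1 \<and> (a, b) \<in> R1 \<longrightarrow> (a, b) \<in> R1') \<and>
           (\<forall>a b c. (a, b) \<in> R1' \<and> (b, c) \<in> E1 \<longrightarrow> (a, c) \<in> R1') \<and>
           (\<forall>a b. (a, b) \<in> R2 \<longrightarrow> (a, b) \<in> E1)" by blast
    show ?thesis apply (rule that[of R1' B1 E1]) using h unfolding wf_succ_def by simp_all
  qed
  have w2: "wf (R2\<inverse>)" using assms(1) by (simp add: wf_succ_def)
  let ?A = "Wellfounded.acc ((R1 \<union> R2)\<inverse>)"
  have U: "\<forall>b. b \<in> B1 \<longrightarrow> (a, b) \<in> R1' \<longrightarrow> b \<in> ?A" for a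
    using w1
  proof (induction a rule: wf_induct_rule)
    case (less a)
    note OIH = less.IH
    have "b \<in> B1 \<longrightarrow> (a, b) \<in> R1' \<longrightarrow> b \<in> ?A" for b
      using w2
    proof (induction b rule: wf_induct_rule)
      case (less b)
      show ?case
      proof (intro impI)
        assume bB: "b \<in> B1" and ab: "(a, b) \<in> R1'"
        show "b \<in> ?A"
        proof (rule accI)
          fix c assume "(c, b) \<in> (R1 \<union> R2)\<inverse>"
          hence bc: "(b, c) \<in> R1 \<union> R2" by simp
          have cB: "c \<in> B1" using cl[OF bB bc] .
          show "c \<in> ?A"
          proof (cases "(b, c) \<in> R2")
            case True
            then show ?thesis using less.IH[of c] cB comp[OF ab r2[OF True]] by simp
          next
            case False
            hence "(b, c) \<in> R1'" using bc r1[OF bB] by blast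
            then show ?thesis using OIH[of b] ab cB by blast
          qed
        qed
      qed
    qed
    then show ?case by blast
  qed
  have "b \<in> B1 \<longrightarrow> b \<in> ?A" for b
    using w2
  proof (induction b rule: wf_induct_rule)
    case (less b)
    show ?case
    proof
      assume bB: "b \<in> B1"
      show "b \<in> ?A"
      proof (rule accI)
        fix c assume "(c, b) \<in> (R1 \<union> R2)\<inverse>"
        hence bc: "(b, c) \<in> R1 \<union> R2" by simp
        have cB: "c \<in> B1" using cl[OF bB bc] .
        show "c \<in> ?A"
        proof (cases "(b, c) \<in> R2")
          case True
          then show ?thesis using less.IH[of c] cB by simp
        next
          case False
          hence "(b, c) \<in> R1'" using bc r1[OF bB] by blast
          then show ?thesis using U cB by blast
        qed
      qed
    qed
  qed
  then show ?thesis using xB by (simp add: Acc_def)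
qed

end
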